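(* Let $A\in\mathbb{R}^{m\times n}$ with $\operatorname{rk}(A)=m$, $b\in\mathbb{R}^m$, $P=\{x\in\mathbb{R}^n: Ax=b,\ x\ge\mathbb{0}\}$. Let $B\subseteq[n]$ be a feasible basis, $N=[n]\setminus B$, $x^*=(A_B^{-1}b,\mathbb{0}_N)\in P$, and let $x^{(0)}$ be a vertex of $P$. Consider the following procedure: for $t=0,1,\dots$, while $x^{(t)}\ne x^*$, take a conformal circuit decomposition $x^*-x^{(t)}=\sum_{j=1}^k h^{(j)}$ with $k\le n-m$, choose $g^{(t)}=h^{(j)}$ for some $j$ maximizing $\|h^{(j)}_N\|_1$, and set $x^{(t+1)}=\operatorname{aug}_P(x^{(t)},g^{(t)})$. Define $L_t=\{i\in[n]: x^*_i>n\kappa_A\|x^{(t)}_N\|_1\}$ and $R_t=\{i\in[n]: x^{(t)}_i\le(n-m)x^*_i\}$. Then for every iteration $t\ge0$, $L_t\subseteq L_{t+1}\subseteq B$ and $R_t\subseteq R_{t+1}$.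
   Context: An elementary vector of $\ker(A)$ is a nonzero $g\in\ker(A)$ with inclusion-minimal support among nonzero vectors of $\ker(A)$; $\kappa_A=\max\{|g_i|/|g_j|: g \text{ elementary},\ i,j\in\mathrm{supp}(g)\}$. Vectors $x,y$ are sign-compatible if $x_iy_i\ge0$ for all $i$; $x\sqsubseteq y$ means they are sign-compatible and $|x_i|\le|y_i|$ for all $i$. A conformal circuit decomposition of $x\in\ker(A)$ is an expression $x=\sum_{j=1}^k h^{(j)}$ with each $h^{(j)}$ elementary and $h^{(j)}\sqsubseteq x$ (one with $k\le n-m$ always exists). For $x\in P$ and elementary $g$, $\operatorname{aug}_P(x,g)=x+\alpha g$ with $\alpha=\max\{\bar\alpha: x+\bar\alpha g\in P\}$. *)

theory Defs
  imports "HOL-Analysis.Analysis"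
begin

text \<open>Vectors in R^n are \<open>real^'n\<close>, matrices A in R^(m x n) are \<open>real^'n^'m\<close>;
  n = CARD('n), m = CARD('m), indices [n] are the elements of type 'n.\<close>

definition polyhedron_std :: "real^'n^'m \<Rightarrow> real^'m \<Rightarrow> (real^'n) set" where
  "polyhedron_std A b = {x. A *v x = b \<and> (\<forall>i. 0 \<le> x $ i)}"

definition kerA :: "real^'n^'m \<Rightarrow> (real^'n) set" where
  "kerA A = {x. A *v x = 0}"

definition supp :: "real^'n \<Rightarrow> 'n set" where
  "supp x = {i. x $ i \<noteq> 0}"

definition elementary :: "real^'n^'m \<Rightarrow> real^'n \<Rightarrow> bool" where
  "elementary A g \<longleftrightarrow> g \<in> kerA A \<and> g \<noteq> 0 \<and>
     (\<forall>h. h \<in> kerA A \<and> h \<noteq> 0 \<longrightarrow> \<not> (supp h \<subset> supp g))"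

definition kappa :: "real^'n^'m \<Rightarrow> real" where
  "kappa A = Sup {\<bar>g $ i\<bar> / \<bar>g $ j\<bar> | g i j. elementary A g \<and> i \<in> supp g \<and> j \<in> supp g}"

definition sign_compatible :: "real^'n \<Rightarrow> real^'n \<Rightarrow> bool" where
  "sign_compatible x y \<longleftrightarrow> (\<forall>i. 0 \<le> x $ i * y $ i)"

definition conf_le :: "real^'n \<Rightarrow> real^'n \<Rightarrow> bool" where
  "conf_le x y \<longleftrightarrow> sign_compatible x y \<and> (\<forall>i. \<bar>x $ i\<bar> \<le> \<bar>y $ i\<bar>)"

definition conformal_circuit_decomp ::
    "real^'n^'m \<Rightarrow> real^'n \<Rightarrow> nat \<Rightarrow> (nat \<Rightarrow> real^'n) \<Rightarrow> bool" where
  "conformal_circuit_decomp A x k h \<longleftrightarrow>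
     x = (\<Sum>j<k. h j) \<and> (\<forall>j<k. elementary A (h j) \<and> conf_le (h j) x)"

definition aug :: "(real^'n) set \<Rightarrow> real^'n \<Rightarrow> real^'n \<Rightarrow> real^'n" where
  "aug P x g = x + (GREATEST \<alpha>. x + \<alpha> *\<^sub>R g \<in> P) *\<^sub>R g"

definition is_basis :: "real^'n^'m \<Rightarrow> 'n set \<Rightarrow> bool" where
  "is_basis A B \<longleftrightarrow> card B = CARD('m) \<and> inj_on (\<lambda>i. column i A) B \<and>
     independent ((\<lambda>i. column i A) ` B)"

text \<open>The basic solution x = (A_B^{-1} b, 0_N): the unique x with A x = b, x_N = 0.\<close>
definition basic_solution :: "real^'n^'m \<Rightarrow> real^'m \<Rightarrow> 'n set \<Rightarrow> real^'n \<Rightarrow> bool" where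
  "basic_solution A b B x \<longleftrightarrow> A *v x = b \<and> (\<forall>i. i \<notin> B \<longrightarrow> x $ i = 0)"

definition norm1_on :: "'n set \<Rightarrow> real^'n \<Rightarrow> real" where
  "norm1_on N x = (\<Sum>i\<in>N. \<bar>x $ i\<bar>)"

end

theory Submission
  imports Defs
begin
lemma ker_suppB_zero:
  fixes A :: "real^'n^'m"
  assumes basis: "is_basis A B" and ker: "A *v g = 0" and sB: "\<And>i. i \<notin> B \<Longrightarrow> g $ i = 0"
  shows "g = 0"
proof -
  have ind: "independent ((\<lambda>i. column i A) ` B)" and inj: "inj_on (\<lambda>i. column i A) B"
    using basis unfolding is_basis_def by auto
  have "A *v g = (\<Sum>i\<in>B. g $ i *s column i A)"
    unfolding matrix_mult_sum by (rule sum.mono_neutral_right) (auto simp: sB)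
  also have "\<dots> = (\<Sum>v\<in>(\<lambda>i. column i A) ` B. g $ (inv_into B (\<lambda>i. column i A) v) *s v)"
    using inj by (simp add: sum.reindex) (rule sum.cong, auto simp: inv_into_f_f[OF inj])
  finally have z: "(\<Sum>v\<in>(\<lambda>i. column i A) ` B. g $ (inv_into B (\<lambda>i. column i A) v) *\<^sub>R v) = 0"
    using ker by (simp add: scalar_mult_eq_scaleR)
  show ?thesis
  proof (rule ccontr)
    assume "g \<noteq> 0"
    then obtain i where gi: "g $ i \<noteq> 0" by (metis vec_eq_iff zero_index)
    then have iB: "i \<in> B" using sB by blast
    have "dependent ((\<lambda>i. column i A) ` B)"
      unfolding dependent_explicit
      apply (rule exI[of _ "(\<lambda>i. column i A) ` B"])
      apply (rule exI[of _ "\<lambda>v. g $ (inv_into B (\<lambda>i. column i A) v)"])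
      using z iB gi inj inv_into_f_f[OF inj iB] by (auto intro!: bexI[of _ i])
    with ind show False by simp
  qed
qed

lemma nonpos_N:
  fixes A :: "real^'n^'m"
  assumes xs: "basic_solution A b B xstar" and xP: "x \<in> polyhedron_std A b"
    and c: "conf_le h (xstar - x)" and i: "i \<notin> B"
  shows "h $ i \<le> 0"
proof -
  have "xstar $ i = 0" using xs i by (simp add: basic_solution_def)
  moreover have "0 \<le> x $ i" using xP by (simp add: polyhedron_std_def)
  moreover have "0 \<le> h $ i * (xstar $ i - x $ i)" "\<bar>h $ i\<bar> \<le> \<bar>xstar $ i - x $ i\<bar>"
    using c by (auto simp: conf_le_def sign_compatible_def)
  ultimately show ?thesis
    by (cases "h $ i > 0") (auto simp: mult_le_0_iff)
qed

lemma greatest_aug: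
  fixes A :: "real^'n^'m"
  assumes xP: "x \<in> polyhedron_std A b" and ker: "A *v g = 0" and neg: "g $ i0 < 0"
  shows "x + (GREATEST a. x + a *\<^sub>R g \<in> polyhedron_std A b) *\<^sub>R g \<in> polyhedron_std A b
     \<and> 0 \<le> (GREATEST a. x + a *\<^sub>R g \<in> polyhedron_std A b)"
proof -
  have Ax: "A *v x = b" and x0: "\<And>i. 0 \<le> x $ i" using xP by (auto simp: polyhedron_std_def)
  have S: "\<And>a. (x + a *\<^sub>R g \<in> polyhedron_std A b) \<longleftrightarrow> (\<forall>i. 0 \<le> x $ i + a * g $ i)"
  proof -
    fix a
    have "A *v (x + a *\<^sub>R g) = b" using Ax ker
      by (simp add: matrix_vector_right_distrib matrix_vector_mult_scaleR)
    then show "(x + a *\<^sub>R g \<in> polyhedron_std A b) \<longleftrightarrow> (\<forall>i. 0 \<le> x $ i + a * g $ i)"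
      by (simp add: polyhedron_std_def)
  qed
  define I where "I = {i. g $ i < 0}"
  define a0 where "a0 = Min ((\<lambda>i. x $ i / (- g $ i)) ` I)"
  have fin: "finite ((\<lambda>i. x $ i / (- g $ i)) ` I)" by simp
  have ne: "(\<lambda>i. x $ i / (- g $ i)) ` I \<noteq> {}" using neg I_def by auto
  have le: "\<And>i. i \<in> I \<Longrightarrow> a0 \<le> x $ i / (- g $ i)" unfolding a0_def using fin by auto
  have a0nn: "0 \<le> a0" unfolding a0_def using fin ne x0 I_def
    by (subst Min_ge_iff) (auto simp: divide_nonneg_neg less_imp_le)
  have feas: "\<forall>i. 0 \<le> x $ i + a0 * g $ i"
  proof
    fix i show "0 \<le> x $ i + a0 * g $ i"
    proof (cases "g $ i < 0")
      case True
      then have "a0 \<le> x $ i / (- g $ i)" using le I_def by auto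
      moreover have "0 < - g $ i" using True by simp
      ultimately have "a0 * (- g $ i) \<le> x $ i" by (simp only: pos_le_divide_eq)
      then show ?thesis by simp
    next
      case False then show ?thesis using a0nn x0[of i] by simp
    qed
  qed
  have upper: "\<And>a. \<forall>i. 0 \<le> x $ i + a * g $ i \<Longrightarrow> a \<le> a0"
  proof -
    fix a assume h: "\<forall>i. 0 \<le> x $ i + a * g $ i"
    have "\<forall>i\<in>I. a \<le> x $ i / - g $ i"
    proof
      fix i assume "i \<in> I"
      then have gi: "g $ i < 0" by (simp add: I_def)
      have "a * (- g $ i) \<le> x $ i" using h[rule_format, of i] by simp
      moreover have "0 < - g $ i" using gi by simp
      ultimately show "a \<le> x $ i / - g $ i" by (simp only: pos_le_divide_eq)
    qed
    then show "a \<le> a0" unfolding a0_def using fin ne by (subst Min_ge_iff) auto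
  qed
  have "(GREATEST a. x + a *\<^sub>R g \<in> polyhedron_std A b) = a0"
    by (rule Greatest_equality) (use S feas upper in auto)
  then show ?thesis using S feas a0nn by simp
qed

lemma elem_exists:
  fixes A :: "real^'n^'m"
  assumes "A *v v = 0" "v \<noteq> 0"
  shows "\<exists>g. elementary A g"
proof -
  define P where "P n \<longleftrightarrow> (\<exists>h. h \<in> kerA A \<and> h \<noteq> 0 \<and> card (supp h) = n)" for n
  have "P (card (supp v))" using assms by (auto simp: P_def kerA_def)
  then have "P (LEAST n. P n)" by (rule LeastI)
  then obtain h where h: "h \<in> kerA A" "h \<noteq> 0" "card (supp h) = (LEAST n. P n)"
    unfolding P_def by blast
  have "elementary A h"
    unfolding elementary_def
  proof (intro conjI allI impI h(1,2) notI)
    fix h' assume h': "h' \<in> kerA A \<and> h' \<noteq> 0" and sub: "supp h' \<subset> supp h"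
    have "card (supp h') < card (supp h)" by (rule psubset_card_mono[OF _ sub]) simp
    moreover have "(LEAST n. P n) \<le> card (supp h')" by (rule Least_le) (use h' P_def in blast)
    ultimately show False using h(3) by simp
  qed
  then show ?thesis by blast
qed

lemma elem_scale:
  fixes A :: "real^'n^'m"
  assumes g: "elementary A g" and h: "elementary A h" and s: "supp g = supp h"
  shows "\<exists>c. c \<noteq> 0 \<and> h = c *\<^sub>R g"
proof -
  have gk: "A *v g = 0" "g \<noteq> 0" and hk: "A *v h = 0" "h \<noteq> 0"
    using g h by (auto simp: elementary_def kerA_def)
  obtain j where j: "g $ j \<noteq> 0" using gk(2) by (metis vec_eq_iff zero_index)
  define c where "c = h $ j / g $ j"
  define h' where "h' = h - c *\<^sub>R g"
  have "h' \<in> kerA A" using gk hk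
    by (simp add: h'_def kerA_def matrix_vector_mult_diff_distrib matrix_vector_mult_scaleR)
  moreover have "supp h' \<subset> supp g"
  proof
    show "supp h' \<subseteq> supp g"
    proof
      fix i assume "i \<in> supp h'"
      then have "h $ i - c * g $ i \<noteq> 0" by (simp add: supp_def h'_def)
      then have "h $ i \<noteq> 0 \<or> g $ i \<noteq> 0" by auto
      then show "i \<in> supp g" using s by (auto simp: supp_def)
    qed
    have "h' $ j = 0" using j by (simp add: h'_def c_def)
    then show "supp h' \<noteq> supp g" using j by (auto simp: supp_def)
  qed
  moreover have "\<forall>h. h \<in> kerA A \<and> h \<noteq> 0 \<longrightarrow> \<not> (supp h \<subset> supp g)"
    using g unfolding elementary_def by (elim conjE)
  ultimately have "h' = 0" by (elim allE[of _ h']) simp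
  then have eq: "h = c *\<^sub>R g" by (simp add: h'_def)
  then have "c \<noteq> 0" using hk(2) by auto
  with eq show ?thesis by blast
qed

lemma kappa_ge1:
  fixes A :: "real^'n^'m"
  assumes "A *v v = 0" "v \<noteq> 0"
  shows "1 \<le> kappa A"
proof -
  define K where "K = {\<bar>g $ i\<bar> / \<bar>g $ j\<bar> | g i j. elementary A g \<and> i \<in> supp g \<and> j \<in> supp g}"
  obtain g where g: "elementary A g" using elem_exists[OF assms] by blast
  then obtain i where i: "g $ i \<noteq> 0" unfolding elementary_def by (metis vec_eq_iff zero_index)
  have "1 \<in> K" unfolding K_def mem_Collect_eq
    by (rule exI[of _ g], rule exI[of _ i], rule exI[of _ i]) (use g i in \<open>simp add: supp_def\<close>)
  define rep where "rep S = (SOME g. elementary A g \<and> supp g = S)" for S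
  have "K \<subseteq> (\<lambda>(S, i, j). \<bar>rep S $ i\<bar> / \<bar>rep S $ j\<bar>) ` UNIV"
  proof
    fix r assume "r \<in> K"
    then have "\<exists>h i j. r = \<bar>h $ i\<bar> / \<bar>h $ j\<bar> \<and> elementary A h \<and> i \<in> supp h \<and> j \<in> supp h"
      unfolding K_def by (simp only: mem_Collect_eq)
    then obtain h i j where hij: "r = \<bar>h $ i\<bar> / \<bar>h $ j\<bar>" "elementary A h"
      by blast
    have "elementary A (rep (supp h)) \<and> supp (rep (supp h)) = supp h"
      unfolding rep_def by (rule someI[of _ h]) (use hij in simp)
    then obtain c where c: "c \<noteq> 0" "h = c *\<^sub>R rep (supp h)"
      using elem_scale[of A "rep (supp h)" h] hij by auto
    have hi: "h $ i = c * rep (supp h) $ i" and hj: "h $ j = c * rep (supp h) $ j"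
      using arg_cong[OF c(2), of "\<lambda>v. v $ i"] arg_cong[OF c(2), of "\<lambda>v. v $ j"] by simp_all
    have "r = \<bar>rep (supp h) $ i\<bar> / \<bar>rep (supp h) $ j\<bar>"
      unfolding hij(1) hi hj using c(1) by (simp add: abs_mult)
    then show "r \<in> (\<lambda>(S, i, j). \<bar>rep S $ i\<bar> / \<bar>rep S $ j\<bar>) ` UNIV"
      unfolding image_iff by (intro bexI[of _ "(supp h, i, j)"]) simp_all
  qed
  then have "finite K" by (rule finite_subset) simp
  then have "bdd_above K" by (rule bdd_above_finite)
  then have "1 \<le> Sup K" using \<open>1 \<in> K\<close> by (simp add: cSup_upper)
  then show ?thesis unfolding kappa_def K_def .
qed

lemma one_step:
  fixes A :: "real^'n^'m"
  assumes basis: "is_basis A B" and xs: "basic_solution A b B xstar"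
    and xsP: "xstar \<in> polyhedron_std A b"
    and xP: "x \<in> polyhedron_std A b"
    and kle: "k \<le> CARD('n) - CARD('m)"
    and dec: "conformal_circuit_decomp A (xstar - x) k h"
    and jk: "j < k" and maxj: "\<forall>j'<k. norm1_on (- B) (h j') \<le> norm1_on (- B) (h j)"
    and x': "x' = aug (polyhedron_std A b) x (h j)"
  shows "x' \<in> polyhedron_std A b \<and> norm1_on (- B) x' \<le> norm1_on (- B) x \<and>
     (\<forall>i. x $ i \<le> (real CARD('n) - real CARD('m)) * xstar $ i \<longrightarrow>
          x' $ i \<le> (real CARD('n) - real CARD('m)) * xstar $ i)"
proof -
  define gg where "gg = h j"
  have sumh: "xstar - x = (\<Sum>j<k. h j)" and elh: "\<And>j'. j' < k \<Longrightarrow> elementary A (h j')"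
    and cfh: "\<And>j'. j' < k \<Longrightarrow> conf_le (h j') (xstar - x)"
    using dec by (auto simp: conformal_circuit_decomp_def)
  have gker: "A *v gg = 0" and gnz: "gg \<noteq> 0"
    using elh[OF jk] by (auto simp: gg_def elementary_def kerA_def)
  have gcf: "conf_le gg (xstar - x)" using cfh[OF jk] by (simp add: gg_def)
  have x0: "\<And>i. 0 \<le> x $ i" using xP by (simp add: polyhedron_std_def)
  have xsN: "\<And>i. i \<notin> B \<Longrightarrow> xstar $ i = 0" using xs by (simp add: basic_solution_def)
  have hN: "\<And>j' i. j' < k \<Longrightarrow> i \<notin> B \<Longrightarrow> h j' $ i \<le> 0"
    using nonpos_N[OF xs xP] cfh by blast
  have gN: "\<And>i. i \<notin> B \<Longrightarrow> gg $ i \<le> 0" using hN[OF jk] by (simp add: gg_def)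
  have "\<exists>i0. i0 \<notin> B \<and> gg $ i0 < 0"
  proof (rule ccontr)
    assume na: "\<not> (\<exists>i0. i0 \<notin> B \<and> gg $ i0 < 0)"
    have "\<And>i. i \<notin> B \<Longrightarrow> gg $ i = 0"
    proof -
      fix i assume "i \<notin> B"
      then show "gg $ i = 0" using na gN[of i] by force
    qed
    then have "gg = 0" by (rule ker_suppB_zero[OF basis gker])
    with gnz show False ..
  qed
  then obtain i0 where i0: "i0 \<notin> B" "gg $ i0 < 0" by blast
  define \<alpha> where "\<alpha> = (GREATEST a. x + a *\<^sub>R gg \<in> polyhedron_std A b)"
  have ga: "x + \<alpha> *\<^sub>R gg \<in> polyhedron_std A b" "0 \<le> \<alpha>"
    using greatest_aug[OF xP gker i0(2)] unfolding \<alpha>_def by auto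
  have x'eq: "x' = x + \<alpha> *\<^sub>R gg" using x' by (simp add: aug_def \<alpha>_def gg_def)
  have feas: "\<And>i. 0 \<le> x $ i + \<alpha> * gg $ i" using ga(1) by (simp add: polyhedron_std_def)
  have comp: "\<And>i. x' $ i = x $ i + \<alpha> * gg $ i" by (simp add: x'eq)
  have P1: "x' \<in> polyhedron_std A b" using ga x'eq by simp
  have P2: "norm1_on (- B) x' \<le> norm1_on (- B) x"
    unfolding norm1_on_def
  proof (rule sum_mono)
    fix i assume "i \<in> - B"
    then have "gg $ i \<le> 0" using gN by simp
    then have "\<alpha> * gg $ i \<le> 0" using ga(2) by (simp add: mult_nonneg_nonpos)
    then show "\<bar>x' $ i\<bar> \<le> \<bar>x $ i\<bar>" using comp[of i] feas[of i] x0[of i] by simp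
  qed
  have normx: "norm1_on (- B) x = (\<Sum>j'<k. norm1_on (- B) (h j'))"
  proof -
    have "norm1_on (- B) x = (\<Sum>i\<in>- B. \<Sum>j'<k. - h j' $ i)"
      unfolding norm1_on_def
    proof (rule sum.cong[OF refl])
      fix i assume "i \<in> - B"
      then have "xstar $ i = 0" using xsN by simp
      then have "- x $ i = (\<Sum>j<k. h j) $ i" using sumh by (metis diff_0 vector_minus_component)
      then show "\<bar>x $ i\<bar> = (\<Sum>j'<k. - h j' $ i)" using x0[of i]
        by (simp add: sum_component sum_negf)
    qed
    also have "\<dots> = (\<Sum>j'<k. \<Sum>i\<in>- B. - h j' $ i)" by (rule sum.swap)
    also have "\<dots> = (\<Sum>j'<k. norm1_on (- B) (h j'))"
      unfolding norm1_on_def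
      by (rule sum.cong[OF refl], rule sum.cong[OF refl]) (use hN in auto)
    finally show ?thesis .
  qed
  also have "\<dots> \<le> real k * norm1_on (- B) gg"
    using sum_bounded_above[of "{..<k}" "\<lambda>j'. norm1_on (- B) (h j')" "norm1_on (- B) gg"] maxj
    by (simp add: gg_def)
  finally have nxk: "norm1_on (- B) x \<le> real k * norm1_on (- B) gg" .
  have ak: "\<alpha> \<le> real k"
  proof (rule ccontr)
    assume "\<not> \<alpha> \<le> real k"
    then have lt: "real k < \<alpha>" by simp
    have "(\<Sum>i\<in>- B. real k * (- gg $ i)) < (\<Sum>i\<in>- B. x $ i)"
    proof (rule sum_strict_mono_ex1)
      show "\<forall>i\<in>- B. real k * - gg $ i \<le> x $ i"
      proof
        fix i assume "i \<in> - B"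
        then have "0 \<le> - gg $ i" using gN by simp
        then have "real k * - gg $ i \<le> \<alpha> * - gg $ i" using lt by (intro mult_right_mono) auto
        then show "real k * - gg $ i \<le> x $ i" using feas[of i] by simp
      qed
      have "real k * - gg $ i0 < \<alpha> * - gg $ i0" using lt i0(2) by (simp add: mult_strict_right_mono)
      then show "\<exists>i\<in>- B. real k * - gg $ i < x $ i" using feas[of i0] i0(1) by force
    qed simp
    also have "(\<Sum>i\<in>- B. x $ i) = norm1_on (- B) x" using x0 by (simp add: norm1_on_def)
    also have "(\<Sum>i\<in>- B. real k * (- gg $ i)) = real k * norm1_on (- B) gg"
      unfolding norm1_on_def sum_distrib_left using gN
      by (intro sum.cong) auto
    finally show False using nxk by simp
  qed
  have P3: "\<forall>i. x $ i \<le> (real CARD('n) - real CARD('m)) * xstar $ i \<longrightarrow>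
          x' $ i \<le> (real CARD('n) - real CARD('m)) * xstar $ i"
  proof (intro allI impI)
    fix i assume hi: "x $ i \<le> (real CARD('n) - real CARD('m)) * xstar $ i"
    define D where "D = real CARD('n) - real CARD('m)"
    have D1: "1 \<le> D" and kD: "real k \<le> D" using kle jk by (auto simp: D_def)
    show "x' $ i \<le> (real CARD('n) - real CARD('m)) * xstar $ i"
    proof (cases "gg $ i \<le> 0")
      case True
      then have "\<alpha> * gg $ i \<le> 0" using ga(2) by (simp add: mult_nonneg_nonpos)
      then show ?thesis using comp[of i] hi by simp
    next
      case False
      then have gp: "0 < gg $ i" by simp
      have "0 \<le> gg $ i * (xstar $ i - x $ i)" "\<bar>gg $ i\<bar> \<le> \<bar>xstar $ i - x $ i\<bar>"
        using gcf by (auto simp: conf_le_def sign_compatible_def)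
      then have gle: "gg $ i \<le> xstar $ i - x $ i" using gp
        by (auto simp: zero_le_mult_iff)
      have "\<alpha> * gg $ i \<le> D * gg $ i" using ak kD gp by (simp add: mult_right_mono)
      also have "\<dots> \<le> D * (xstar $ i - x $ i)" using gle D1 by (simp add: mult_left_mono)
      finally have "x' $ i \<le> D * xstar $ i - (D - 1) * x $ i" using comp[of i]
        by (simp add: algebra_simps)
      moreover have "0 \<le> (D - 1) * x $ i" using D1 x0[of i] by simp
      ultimately show ?thesis unfolding D_def by linarith
    qed
  qed
  show ?thesis using P1 P2 P3 by blast
qed

theorem lemma3p2:
  fixes A :: "real^'n^'m" and b :: "real^'m" and B :: "'n set"
    and xstar :: "real^'n" and x :: "nat \<Rightarrow> real^'n" and g :: "nat \<Rightarrow> real^'n"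
    and t :: nat
  assumes rank: "rank A = CARD('m)"
    and basis: "is_basis A B"
    and xstar: "basic_solution A b B xstar"
    and feasible: "xstar \<in> polyhedron_std A b"
    and vertex: "x 0 extreme_point_of (polyhedron_std A b)"
    and step: "\<And>s. x s \<noteq> xstar \<Longrightarrow>
       (\<exists>k h j. k \<le> CARD('n) - CARD('m) \<and>
          conformal_circuit_decomp A (xstar - x s) k h \<and>
          j < k \<and> (\<forall>j'<k. norm1_on (- B) (h j') \<le> norm1_on (- B) (h j)) \<and>
          g s = h j) \<and>
       x (Suc s) = aug (polyhedron_std A b) (x s) (g s)"
    and running: "\<forall>s\<le>t. x s \<noteq> xstar"
  defines "L \<equiv> \<lambda>s. {i. xstar $ i > real CARD('n) * kappa A * norm1_on (- B) (x s)}"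
    and "R \<equiv> \<lambda>s. {i. x s $ i \<le> (real CARD('n) - real CARD('m)) * xstar $ i}"
  shows "L t \<subseteq> L (Suc t) \<and> L (Suc t) \<subseteq> B \<and> R t \<subseteq> R (Suc t)"
proof -
  let ?P = "polyhedron_std A b"
  have inP: "x s \<in> ?P" if "s \<le> t" for s
    using that
  proof (induction s)
    case 0
    then show ?case using vertex by (simp add: extreme_point_of_def)
  next
    case (Suc s)
    then have st: "s \<le> t" and xsP: "x s \<in> ?P" by auto
    have ne: "x s \<noteq> xstar" using running st by blast
    from step[OF ne] obtain k h j where kh: "k \<le> CARD('n) - CARD('m)"
      "conformal_circuit_decomp A (xstar - x s) k h" "j < k"
      "\<forall>j'<k. norm1_on (- B) (h j') \<le> norm1_on (- B) (h j)" "g s = h j"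
      and nx: "x (Suc s) = aug ?P (x s) (g s)" by blast
    show ?case using one_step[OF basis xstar feasible xsP kh(1,2,3,4)] nx kh(5) by simp
  qed
  have ne: "x t \<noteq> xstar" using running by blast
  from step[OF ne] obtain k h j where kh: "k \<le> CARD('n) - CARD('m)"
    "conformal_circuit_decomp A (xstar - x t) k h" "j < k"
    "\<forall>j'<k. norm1_on (- B) (h j') \<le> norm1_on (- B) (h j)" "g t = h j"
    and nx: "x (Suc t) = aug ?P (x t) (g t)" by blast
  have os: "norm1_on (- B) (x (Suc t)) \<le> norm1_on (- B) (x t) \<and>
     (\<forall>i. x t $ i \<le> (real CARD('n) - real CARD('m)) * xstar $ i \<longrightarrow>
          x (Suc t) $ i \<le> (real CARD('n) - real CARD('m)) * xstar $ i)"
    using one_step[OF basis xstar feasible inP[OF order_refl] kh(1,2,3,4)] nx kh(5) by simp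
  have "A *v (xstar - x t) = 0" using feasible inP[OF order_refl]
    by (simp add: polyhedron_std_def matrix_vector_mult_diff_distrib)
  moreover have "xstar - x t \<noteq> 0" using ne by simp
  ultimately have k1: "1 \<le> kappa A" by (rule kappa_ge1)
  have c0: "0 \<le> real CARD('n) * kappa A" using k1 by simp
  have L1: "L t \<subseteq> L (Suc t)"
  proof
    fix i assume "i \<in> L t"
    then have "xstar $ i > real CARD('n) * kappa A * norm1_on (- B) (x t)" by (simp add: L_def)
    moreover have "real CARD('n) * kappa A * norm1_on (- B) (x (Suc t))
        \<le> real CARD('n) * kappa A * norm1_on (- B) (x t)"
      by (rule mult_left_mono) (use os c0 in auto)
    ultimately have "real CARD('n) * kappa A * norm1_on (- B) (x (Suc t)) < xstar $ i"
      by linarith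
    then show "i \<in> L (Suc t)" by (simp add: L_def)
  qed
  have L2: "L (Suc t) \<subseteq> B"
  proof
    fix i assume "i \<in> L (Suc t)"
    then have "xstar $ i > real CARD('n) * kappa A * norm1_on (- B) (x (Suc t))" by (simp add: L_def)
    moreover have "0 \<le> norm1_on (- B) (x (Suc t))" by (simp add: norm1_on_def sum_nonneg)
    ultimately have "xstar $ i > 0" using c0 by (smt (verit) mult_nonneg_nonneg)
    then show "i \<in> B" using xstar by (auto simp: basic_solution_def)
  qed
  have R1: "R t \<subseteq> R (Suc t)" using os by (auto simp: R_def)
  show ?thesis using L1 L2 R1 by blast
qed

end
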